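(* Let $G$ be an $\alpha_i$-metric graph ($i\ge 0$ an integer) and let $x,y$ be a pair of mutually distant vertices of $G$. Then $d(x,y)\ge 2rad(G)-4i-3$ and $d(x,y)\ge diam(G)-3i-2$. Furthermore, any middle vertex $z$ of a shortest path between $x$ and $y$ satisfies $e(z)\le\lceil d(x,y)/2\rceil+2i+1$.
   Context: All graphs are finite, connected, unweighted, undirected, simple; $d(u,v)$ is the shortest-path distance. $I(u,v)=\{x: d(u,x)+d(x,v)=d(u,v)\}$. A graph is $\alpha_i$-metric if for all vertices $u,v,w,x$: whenever $v\in I(u,w)$, $w\in I(v,x)$ and $v,w$ are adjacent, then $d(u,x)\ge d(u,v)+d(v,x)-i$. $e(v)=\max_u d(u,v)$, $rad(G)=\min_v e(v)$, $diam(G)=\max_v e(v)$. Vertices $x,y$ are mutually distant if $e(x)=e(y)=d(x,y)$. A middle vertex of a shortest $(x,y)$-path is a vertex $z$ on it with $\{d(x,z),d(y,z)\}=\{\lfloor d(x,y)/2\rfloor,\lceil d(x,y)/2\rceil\}$. *)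

theory Defs
  imports Main
begin

definition graph :: "'a set \<Rightarrow> ('a \<Rightarrow> 'a \<Rightarrow> bool) \<Rightarrow> bool" where
  "graph V E \<longleftrightarrow> finite V \<and> V \<noteq> {} \<and>
     (\<forall>u v. E u v \<longrightarrow> u \<in> V \<and> v \<in> V) \<and>
     (\<forall>u v. E u v \<longrightarrow> E v u) \<and> (\<forall>u. \<not> E u u)"

definition walk :: "'a set \<Rightarrow> ('a \<Rightarrow> 'a \<Rightarrow> bool) \<Rightarrow> 'a list \<Rightarrow> bool" where
  "walk V E p \<longleftrightarrow> p \<noteq> [] \<and> set p \<subseteq> V \<and>
     (\<forall>k. Suc k < length p \<longrightarrow> E (p ! k) (p ! Suc k))"

definition walk_betw :: "'a set \<Rightarrow> ('a \<Rightarrow> 'a \<Rightarrow> bool) \<Rightarrow> 'a \<Rightarrow> 'a list \<Rightarrow> 'a \<Rightarrow> bool" where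
  "walk_betw V E u p v \<longleftrightarrow> walk V E p \<and> hd p = u \<and> last p = v"

definition connected_graph :: "'a set \<Rightarrow> ('a \<Rightarrow> 'a \<Rightarrow> bool) \<Rightarrow> bool" where
  "connected_graph V E \<longleftrightarrow> graph V E \<and> (\<forall>u\<in>V. \<forall>v\<in>V. \<exists>p. walk_betw V E u p v)"

definition dist :: "'a set \<Rightarrow> ('a \<Rightarrow> 'a \<Rightarrow> bool) \<Rightarrow> 'a \<Rightarrow> 'a \<Rightarrow> nat" where
  "dist V E u v = (LEAST n. \<exists>p. walk_betw V E u p v \<and> length p = Suc n)"

definition interval :: "'a set \<Rightarrow> ('a \<Rightarrow> 'a \<Rightarrow> bool) \<Rightarrow> 'a \<Rightarrow> 'a \<Rightarrow> 'a set" where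
  "interval V E u v = {x \<in> V. dist V E u x + dist V E x v = dist V E u v}"

definition alpha_metric :: "nat \<Rightarrow> 'a set \<Rightarrow> ('a \<Rightarrow> 'a \<Rightarrow> bool) \<Rightarrow> bool" where
  "alpha_metric i V E \<longleftrightarrow>
     (\<forall>u\<in>V. \<forall>v\<in>V. \<forall>w\<in>V. \<forall>x\<in>V.
        v \<in> interval V E u w \<and> w \<in> interval V E v x \<and> E v w \<longrightarrow>
        int (dist V E u x) \<ge> int (dist V E u v) + int (dist V E v x) - int i)"

definition ecc :: "'a set \<Rightarrow> ('a \<Rightarrow> 'a \<Rightarrow> bool) \<Rightarrow> 'a \<Rightarrow> nat" where
  "ecc V E v = Max ((\<lambda>u. dist V E u v) ` V)"

definition rad :: "'a set \<Rightarrow> ('a \<Rightarrow> 'a \<Rightarrow> bool) \<Rightarrow> nat" where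
  "rad V E = Min (ecc V E ` V)"

definition diam :: "'a set \<Rightarrow> ('a \<Rightarrow> 'a \<Rightarrow> bool) \<Rightarrow> nat" where
  "diam V E = Max (ecc V E ` V)"

definition mutually_distant :: "'a set \<Rightarrow> ('a \<Rightarrow> 'a \<Rightarrow> bool) \<Rightarrow> 'a \<Rightarrow> 'a \<Rightarrow> bool" where
  "mutually_distant V E x y \<longleftrightarrow>
     ecc V E x = dist V E x y \<and> ecc V E y = dist V E x y"

definition shortest_path :: "'a set \<Rightarrow> ('a \<Rightarrow> 'a \<Rightarrow> bool) \<Rightarrow> 'a \<Rightarrow> 'a list \<Rightarrow> 'a \<Rightarrow> bool" where
  "shortest_path V E x p y \<longleftrightarrow> walk_betw V E x p y \<and> length p = Suc (dist V E x y)"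

definition middle_vertex :: "'a set \<Rightarrow> ('a \<Rightarrow> 'a \<Rightarrow> bool) \<Rightarrow> 'a \<Rightarrow> 'a list \<Rightarrow> 'a \<Rightarrow> 'a \<Rightarrow> bool" where
  "middle_vertex V E x p y z \<longleftrightarrow> z \<in> set p \<and>
     {dist V E x z, dist V E y z} = {dist V E x y div 2, (dist V E x y + 1) div 2}"

end

theory Submission imports Defs begin

lemma walk_single: "walk V E [a] \<longleftrightarrow> a \<in> V"
  unfolding walk_def by auto

lemma walk_Cons2: "walk V E (a # b # p) \<longleftrightarrow> a \<in> V \<and> E a b \<and> walk V E (b # p)"
proof
  assume h: "walk V E (a # b # p)"
  have "\<forall>k. Suc k < length (b # p) \<longrightarrow> E ((b # p) ! k) ((b # p) ! Suc k)"
  proof (intro allI impI)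
    fix k assume "Suc k < length (b # p)"
    then have "Suc (Suc k) < length (a # b # p)" by simp
    with h have "E ((a # b # p) ! Suc k) ((a # b # p) ! Suc (Suc k))" unfolding walk_def by blast
    then show "E ((b # p) ! k) ((b # p) ! Suc k)" by simp
  qed
  moreover have "E a b"
  proof -
    have "Suc 0 < length (a # b # p)" by simp
    then have "E ((a # b # p) ! 0) ((a # b # p) ! Suc 0)" using h unfolding walk_def by blast
    then show ?thesis by simp
  qed
  ultimately show "a \<in> V \<and> E a b \<and> walk V E (b # p)" using h unfolding walk_def by auto
next
  assume h: "a \<in> V \<and> E a b \<and> walk V E (b # p)"
  have "\<forall>k. Suc k < length (a # b # p) \<longrightarrow> E ((a # b # p) ! k) ((a # b # p) ! Suc k)"
  proof (intro allI impI)
    fix k assume k: "Suc k < length (a # b # p)"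
    show "E ((a # b # p) ! k) ((a # b # p) ! Suc k)"
    proof (cases k)
      case 0 then show ?thesis using h by simp
    next
      case (Suc j)
      then have "Suc j < length (b # p)" using k by simp
      then have "E ((b # p) ! j) ((b # p) ! Suc j)" using h unfolding walk_def by blast
      then show ?thesis using Suc by simp
    qed
  qed
  then show "walk V E (a # b # p)" using h unfolding walk_def by auto
qed

lemma walk_append: "walk V E p \<Longrightarrow> walk V E q \<Longrightarrow> last p = hd q \<Longrightarrow> walk V E (p @ tl q)"
proof (induction p)
  case Nil then show ?case by (simp add: walk_def)
next
  case (Cons a p)
  show ?case
  proof (cases p)
    case Nil
    then have "a # tl q = q" using Cons.prems by (metis list.collapse walk_def last.simps)
    then show ?thesis using Nil Cons.prems by simp
  next
    case (Cons b p')
    with Cons.prems have h: "a \<in> V" "E a b" "walk V E (b # p')" by (auto simp: walk_Cons2)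
    have "walk V E (p @ tl q)" using Cons.IH Cons.prems h(3) \<open>p = b # p'\<close> by simp
    then show ?thesis using h \<open>p = b # p'\<close> by (simp add: walk_Cons2)
  qed
qed

lemma walk_rev: assumes "\<forall>u v. E u v \<longrightarrow> E v u" "walk V E p" shows "walk V E (rev p)"
proof -
  have "E (rev p ! k) (rev p ! Suc k)" if k: "Suc k < length p" for k
  proof -
    have "E (p ! (length p - Suc (Suc k))) (p ! Suc (length p - Suc (Suc k)))"
    proof -
      have "Suc (length p - Suc (Suc k)) < length p" using k by simp
      then show ?thesis using assms(2) unfolding walk_def by blast
    qed
    moreover have "rev p ! k = p ! Suc (length p - Suc (Suc k))" using k
      by (simp add: rev_nth Suc_diff_Suc)
    moreover have "rev p ! Suc k = p ! (length p - Suc (Suc k))" using k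
      by (simp add: rev_nth)
    ultimately show ?thesis using assms(1) by simp
  qed
  then show ?thesis using assms(2) unfolding walk_def by auto
qed


context
  fixes V :: "'a set" and E :: "'a \<Rightarrow> 'a \<Rightarrow> bool"
  assumes cg: "connected_graph V E"
begin

lemma gr: "finite V" "V \<noteq> {}" "\<And>u v. E u v \<Longrightarrow> u \<in> V" "\<And>u v. E u v \<Longrightarrow> v \<in> V"
  "\<And>u v. E u v \<Longrightarrow> E v u" "\<And>u. \<not> E u u"
  using cg unfolding connected_graph_def graph_def by auto

lemma dist_ex: assumes "u \<in> V" "v \<in> V"
  shows "\<exists>p. walk_betw V E u p v \<and> length p = Suc (dist V E u v)"
proof -
  obtain p where p: "walk_betw V E u p v" using cg assms unfolding connected_graph_def by blast
  then have "length p = Suc (length p - 1)" unfolding walk_betw_def walk_def by (cases p) auto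
  then have "\<exists>n p. walk_betw V E u p v \<and> length p = Suc n" using p by blast
  then show ?thesis unfolding dist_def by (rule LeastI_ex)
qed

lemma dist_le: assumes "walk_betw V E u p v" shows "dist V E u v \<le> length p - 1"
proof -
  have "length p = Suc (length p - 1)" using assms unfolding walk_betw_def walk_def by (cases p) auto
  then show ?thesis using assms unfolding dist_def by (metis (mono_tags, lifting) Least_le)
qed

lemma dist_triangle: assumes "u \<in> V" "v \<in> V" "w \<in> V"
  shows "dist V E u v \<le> dist V E u w + dist V E w v"
proof -
  obtain p where p: "walk_betw V E u p w" "length p = Suc (dist V E u w)" using dist_ex assms by blast
  obtain q where q: "walk_betw V E w q v" "length q = Suc (dist V E w v)" using dist_ex assms by blast
  have qn: "q \<noteq> []" "p \<noteq> []" using p q unfolding walk_betw_def walk_def by auto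
  have "walk V E (p @ tl q)" using p q walk_append unfolding walk_betw_def by metis
  moreover have "hd (p @ tl q) = u" using p qn unfolding walk_betw_def by simp
  moreover have "last (p @ tl q) = v"
  proof (cases "tl q = []")
    case True
    then have "q = [hd q]" using qn by (metis list.collapse)
    then show ?thesis using p q True unfolding walk_betw_def by (metis append_Nil2 last.simps)
  next
    case False
    then show ?thesis using q qn by (simp add: walk_betw_def last_tl)
  qed
  ultimately have "walk_betw V E u (p @ tl q) v" unfolding walk_betw_def by simp
  then have "dist V E u v \<le> length (p @ tl q) - 1" by (rule dist_le)
  then show ?thesis using p q qn by simp
qed

lemma dist_sym_le: assumes "u \<in> V" "v \<in> V" shows "dist V E v u \<le> dist V E u v"
proof -
  obtain p where p: "walk_betw V E u p v" "length p = Suc (dist V E u v)" using dist_ex assms by blast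
  have "walk V E (rev p)" using walk_rev gr(5) p unfolding walk_betw_def by blast
  moreover have "p \<noteq> []" using p unfolding walk_betw_def walk_def by auto
  ultimately have "walk_betw V E v (rev p) u" using p unfolding walk_betw_def by (simp add: hd_rev last_rev)
  then show ?thesis using dist_le p by fastforce
qed

lemma dist_sym: "u \<in> V \<Longrightarrow> v \<in> V \<Longrightarrow> dist V E u v = dist V E v u"
  using dist_sym_le by (simp add: antisym)

lemma dist_self: "u \<in> V \<Longrightarrow> dist V E u u = 0"
proof -
  assume "u \<in> V"
  then have "walk_betw V E u [u] u" unfolding walk_betw_def walk_def by auto
  then show ?thesis using dist_le by fastforce
qed

lemma dist_0: assumes "u \<in> V" "v \<in> V" "dist V E u v = 0" shows "u = v"
proof -
  obtain p where p: "walk_betw V E u p v" "length p = Suc (dist V E u v)" using dist_ex assms by blast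
  then obtain a where "p = [a]" using assms(3) by (cases p) auto
  then show ?thesis using p unfolding walk_betw_def by auto
qed

lemma dist_edge: assumes "E u v" shows "dist V E u v = 1"
proof -
  have "walk_betw V E u [u, v] v" using assms gr unfolding walk_betw_def by (simp add: walk_Cons2 walk_single)
  then have "dist V E u v \<le> 1" using dist_le by fastforce
  moreover have "u \<noteq> v" using assms gr(6) by blast
  then have "dist V E u v \<noteq> 0" using dist_0 gr assms by blast
  ultimately show ?thesis by simp
qed

lemma dist_step: assumes "u \<in> V" "v \<in> V" "u \<noteq> v"
  shows "\<exists>w. E u w \<and> dist V E w v + 1 = dist V E u v"
proof -
  obtain p where p: "walk_betw V E u p v" "length p = Suc (dist V E u v)" using dist_ex assms by blast
  have "dist V E u v \<noteq> 0" using dist_0 assms by blast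
  then obtain w r where pr: "p = u # w # r" using p unfolding walk_betw_def
    by (cases p; cases "tl p") auto
  then have "E u w" "walk V E (w # r)" using p unfolding walk_betw_def by (auto simp: walk_Cons2)
  then have "walk_betw V E w (w # r) v" using p pr unfolding walk_betw_def by auto
  then have "dist V E w v \<le> dist V E u v - 1" using dist_le p pr by fastforce
  moreover have "dist V E u v \<le> dist V E u w + dist V E w v"
    using dist_triangle assms gr \<open>E u w\<close> by blast
  ultimately show ?thesis using dist_edge \<open>E u w\<close> \<open>dist V E u v \<noteq> 0\<close> by (intro exI[of _ w]) auto
qed


lemma dist_mid: assumes "u \<in> V" "v \<in> V"
  shows "k \<le> dist V E u v \<Longrightarrow> \<exists>z\<in>V. dist V E u z = k \<and> dist V E z v = dist V E u v - k"
proof (induction k)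
  case 0 then show ?case using assms dist_self by auto
next
  case (Suc k)
  then obtain z where z: "z \<in> V" "dist V E u z = k" "dist V E z v = dist V E u v - k" by auto
  then have "z \<noteq> v" using Suc.prems assms dist_self by fastforce
  then obtain w where w: "E z w" "dist V E w v + 1 = dist V E z v" using dist_step z assms by blast
  have wV: "w \<in> V" using w gr by blast
  have "dist V E u w \<le> dist V E u z + dist V E z w" using dist_triangle assms z wV by blast
  moreover have "dist V E u v \<le> dist V E u w + dist V E w v" using dist_triangle assms z wV by blast
  ultimately show ?case using w z Suc.prems dist_edge wV by (intro bexI[of _ w]) auto
qed

lemma alpha_use: assumes "alpha_metric i V E" "u \<in> V" "v \<in> V" "w \<in> V" "x \<in> V" "E v w"
  "dist V E u w = dist V E u v + 1" "dist V E v x = dist V E w x + 1"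
  shows "dist V E u v + dist V E v x \<le> dist V E u x + i"
proof -
  have "v \<in> interval V E u w" "w \<in> interval V E v x"
    using assms dist_edge[OF assms(6)] unfolding interval_def by auto
  then have "int (dist V E u x) \<ge> int (dist V E u v) + int (dist V E v x) - int i"
    using assms unfolding alpha_metric_def by blast
  then show ?thesis by linarith
qed

lemma down: assumes "x \<in> V" "y \<in> V" "a \<in> V" "dist V E x a = Suc s" "dist V E a y + Suc s = dist V E x y"
  shows "\<exists>a'. E a a' \<and> dist V E x a' = s \<and> dist V E a' y = dist V E a y + 1"
proof -
  have "a \<noteq> x" using assms dist_self by fastforce
  then obtain w where w: "E a w" "dist V E w x + 1 = dist V E a x" using dist_step assms by blast
  have wV: "w \<in> V" using w gr by blast
  have xw: "dist V E x w = s" using w assms wV dist_sym by fastforce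
  have "dist V E w y \<le> dist V E w a + dist V E a y" using dist_triangle assms wV by blast
  moreover have "dist V E w a = 1" using dist_edge gr(5) w by blast
  moreover have "dist V E x y \<le> dist V E x w + dist V E w y" using dist_triangle assms wV by blast
  ultimately show ?thesis using w xw assms by (intro exI[of _ w]) auto
qed

lemma thin: assumes al: "alpha_metric i V E" and xV: "x \<in> V" and yV: "y \<in> V"
  shows "a \<in> V \<Longrightarrow> b \<in> V \<Longrightarrow> dist V E x a = s \<Longrightarrow> dist V E x b = s \<Longrightarrow>
    dist V E a y + s = dist V E x y \<Longrightarrow> dist V E b y + s = dist V E x y \<Longrightarrow> dist V E a b \<le> i + 1"
proof (induction s arbitrary: a b)
  case 0
  then have "a = x" "b = x" using dist_0 xV by (metis dist_sym)+
  then show ?case using dist_self xV by simp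
next
  case (Suc s)
  show ?case
  proof (rule ccontr)
    assume "\<not> dist V E a b \<le> i + 1"
    then have kk: "dist V E a b \<ge> i + 2" by simp
    obtain a' where a': "E a a'" "dist V E x a' = s" "dist V E a' y = dist V E a y + 1"
      using down xV yV Suc.prems by blast
    obtain b' where b': "E b b'" "dist V E x b' = s" "dist V E b' y = dist V E b y + 1"
      using down xV yV Suc.prems by blast
    have a'V: "a' \<in> V" and b'V: "b' \<in> V" using a' b' gr by blast+
    have aa': "dist V E a a' = 1" "dist V E a' a = 1" using a' b' dist_edge gr(5) by blast+
    have bb': "dist V E b b' = 1" "dist V E b' b = 1" using a' b' dist_edge gr(5) by blast+
    have t1: "dist V E a' b \<le> dist V E a' a + dist V E a b" using dist_triangle a'V Suc.prems by blast
    have t2: "dist V E a b \<le> dist V E a a' + dist V E a' b" using dist_triangle a'V Suc.prems by blast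
    have c1: "dist V E a' b = dist V E a b"
    proof (rule ccontr)
      assume ne: "dist V E a' b \<noteq> dist V E a b"
      show False
      proof (cases "dist V E a' b = dist V E a b + 1")
        case True
        have "dist V E b a' = dist V E b a + 1" using True dist_sym a'V Suc.prems by metis
        moreover have "dist V E a x = dist V E a' x + 1"
        proof -
          have "dist V E a x = dist V E x a" "dist V E a' x = dist V E x a'"
            using Suc.prems dist_sym a'V xV by metis+
          then show ?thesis using a' Suc.prems by simp
        qed
        ultimately have "dist V E b a + dist V E a x \<le> dist V E b x + i"
          using alpha_use[OF al, of b a a' x] a' a'V xV Suc.prems by blast
        moreover have "dist V E b a = dist V E a b" "dist V E a x = Suc s" "dist V E b x = Suc s"
          using dist_sym Suc.prems xV by metis+
        ultimately show False using kk by simp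
      next
        case False
        then have F: "dist V E a b = dist V E a' b + 1" using ne t1 t2 aa' by simp
        have "dist V E y a' = dist V E y a + 1" using a' dist_sym a'V yV Suc.prems by metis
        then have "dist V E y a + dist V E a b \<le> dist V E y b + i"
          using alpha_use[OF al, of y a a' b] a' a'V yV Suc.prems F by blast
        moreover have "dist V E y a = dist V E y b"
        proof -
          have "dist V E y a = dist V E a y" "dist V E y b = dist V E b y"
            using Suc.prems dist_sym yV by metis+
          then show ?thesis using Suc.prems by simp
        qed
        ultimately show False using kk by simp
      qed
    qed
    have t3: "dist V E a' b \<le> dist V E a' b' + dist V E b' b" using dist_triangle a'V b'V Suc.prems by blast
    have c2: "dist V E a' b' \<noteq> dist V E a b - 1"
    proof
      assume h: "dist V E a' b' = dist V E a b - 1"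
      have "dist V E a' b = dist V E a' b' + 1" using h c1 kk by simp
      moreover have "dist V E b' y = dist V E b y + 1" using b' by simp
      moreover have "E b' b" using b' gr(5) by blast
      ultimately have "dist V E a' b' + dist V E b' y \<le> dist V E a' y + i"
        using alpha_use[OF al, of a' b' b y] a'V b'V yV Suc.prems by blast
      then show False using h a' b' Suc.prems kk by simp
    qed
    have "dist V E a' b' \<le> i + 1"
      using Suc.IH[OF a'V b'V a'(2) b'(2)] a' b' Suc.prems by simp
    then show False using c1 c2 t3 bb' kk by simp
  qed
qed

lemma nearest: assumes al: "alpha_metric i V E" and xV: "x \<in> V" and yV: "y \<in> V"
  and hx: "\<forall>v\<in>V. dist V E v x \<le> dist V E x y" and hy: "\<forall>v\<in>V. dist V E v y \<le> dist V E x y"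
  and c0: "c0 \<in> V" "dist V E x c0 = s" "dist V E c0 y + s = dist V E x y" and vV: "v \<in> V"
  shows "\<exists>c\<in>V. dist V E x c = s \<and> dist V E c y + s = dist V E x y \<and>
     dist V E c v \<le> max s (dist V E x y - s) + i"
proof -
  let ?P = "\<lambda>c. c \<in> V \<and> dist V E x c = s \<and> dist V E c y + s = dist V E x y"
  obtain c where c: "?P c" and cmin: "\<forall>c'. ?P c' \<longrightarrow> dist V E c v \<le> dist V E c' v"
    using ex_has_least_nat[of ?P c0 "\<lambda>c. dist V E c v"] c0 by blast
  have "dist V E c v \<le> max s (dist V E x y - s) + i"
  proof (cases "c = v")
    case True then show ?thesis using dist_self vV by simp
  next
    case False
    then obtain w where w: "E c w" "dist V E w v + 1 = dist V E c v" using dist_step c vV by blast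
    have wV: "w \<in> V" using w gr by blast
    have cw: "dist V E c w = 1" "dist V E w c = 1" using w dist_edge gr(5) by blast+
    have t1: "dist V E x w \<le> dist V E x c + dist V E c w" using dist_triangle xV c wV by blast
    have t2: "dist V E w y \<le> dist V E w c + dist V E c y" using dist_triangle yV c wV by blast
    have t3: "dist V E x y \<le> dist V E x w + dist V E w y" using dist_triangle xV yV wV by blast
    show ?thesis
    proof (cases "dist V E x w = s + 1")
      case True
      then have "dist V E x c + dist V E c v \<le> dist V E x v + i"
        using alpha_use[OF al, of x c w v] w wV xV vV c by simp
      moreover have "dist V E x v \<le> dist V E x y" using hx vV dist_sym xV by metis
      ultimately show ?thesis using c by simp
    next
      case F1: False
      show ?thesis
      proof (cases "dist V E w y = dist V E c y + 1")
        case True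
        then have "dist V E y w = dist V E y c + 1" using dist_sym wV c yV by metis
        then have "dist V E y c + dist V E c v \<le> dist V E y v + i"
          using alpha_use[OF al, of y c w v] w wV yV vV c by simp
        moreover have "dist V E y v \<le> dist V E x y" using hy vV dist_sym yV by metis
        moreover have "dist V E y c = dist V E c y" using dist_sym yV c by metis
        ultimately have "dist V E c v \<le> s + i" using c by linarith
        then show ?thesis by simp
      next
        case False
        then have "?P w" using F1 t1 t2 t3 cw c wV by simp
        then show ?thesis using cmin w by fastforce
      qed
    qed
  qed
  then show ?thesis using c by blast
qed

end


lemma ecc_ge: assumes "connected_graph V E" "u \<in> V" shows "dist V E u v \<le> ecc V E v"
  using assms gr[OF assms(1)] unfolding ecc_def by (intro Max_ge) auto

lemma ecc_le: assumes "connected_graph V E" "\<forall>u\<in>V. dist V E u v \<le> B" shows "ecc V E v \<le> B"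
  using assms gr[OF assms(1)] unfolding ecc_def by (subst Max_le_iff) auto

lemma mid_bound:
  assumes cg: "connected_graph V E" and al: "alpha_metric i V E" and xV: "x \<in> V" and yV: "y \<in> V"
  and hx: "\<forall>v\<in>V. dist V E v x \<le> dist V E x y" and hy: "\<forall>v\<in>V. dist V E v y \<le> dist V E x y"
  and z: "z \<in> V" "dist V E x z = s" "dist V E z y + s = dist V E x y"
  shows "ecc V E z \<le> max s (dist V E x y - s) + 2 * i + 1"
proof (rule ecc_le[OF cg], intro ballI)
  fix v assume vV: "v \<in> V"
  obtain c where c: "c \<in> V" "dist V E x c = s" "dist V E c y + s = dist V E x y"
     "dist V E c v \<le> max s (dist V E x y - s) + i"
    using nearest[OF cg al xV yV hx hy z vV] by blast
  have "dist V E c z \<le> i + 1" using thin[OF cg al xV yV c(1) z(1) c(2) z(2) c(3) z(3)] .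
  moreover have "dist V E v z \<le> dist V E v c + dist V E c z" using dist_triangle[OF cg vV z(1) c(1)] .
  moreover have "dist V E v c = dist V E c v" using dist_sym[OF cg] vV c by metis
  ultimately show "dist V E v z \<le> max s (dist V E x y - s) + 2 * i + 1" using c(4) by linarith
qed

theorem lemma6:
  fixes V :: "'a set" and E :: "'a \<Rightarrow> 'a \<Rightarrow> bool" and i :: nat and x y :: 'a
  assumes "connected_graph V E"
    and "alpha_metric i V E"
    and "x \<in> V" and "y \<in> V"
    and "mutually_distant V E x y"
  shows "int (dist V E x y) \<ge> 2 * int (rad V E) - 4 * int i - 3 \<and>
         int (dist V E x y) \<ge> int (diam V E) - 3 * int i - 2 \<and>
         (\<forall>p z. shortest_path V E x p y \<and> middle_vertex V E x p y z \<longrightarrow>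
           ecc V E z \<le> (dist V E x y + 1) div 2 + 2 * i + 1)"
proof -
  note cg = assms(1) and al = assms(2) and xV = assms(3) and yV = assms(4)
  define D where "D = dist V E x y"
  have hx: "\<forall>v\<in>V. dist V E v x \<le> dist V E x y"
    using ecc_ge[OF cg] assms(5) unfolding mutually_distant_def by metis
  have hy: "\<forall>v\<in>V. dist V E v y \<le> dist V E x y"
    using ecc_ge[OF cg] assms(5) unfolding mutually_distant_def by metis
  obtain z0 where z0: "z0 \<in> V" "dist V E x z0 = D div 2" "dist V E z0 y = D - D div 2"
    using dist_mid[OF cg xV yV, of "D div 2"] unfolding D_def by auto
  have mx: "max (D div 2) (D - D div 2) = (D + 1) div 2" by simp
  have e0: "ecc V E z0 \<le> (D + 1) div 2 + 2 * i + 1"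
    using mid_bound[OF cg al xV yV hx hy z0(1) z0(2)] z0(3) mx unfolding D_def by simp
  have "rad V E \<le> ecc V E z0" unfolding rad_def using gr[OF cg] z0(1) by (intro Min_le) auto
  then have P1: "int D \<ge> 2 * int (rad V E) - 4 * int i - 3" using e0 by linarith
  have "diam V E \<in> ecc V E ` V" unfolding diam_def using gr[OF cg] by (intro Max_in) auto
  then obtain u where uV: "u \<in> V" and du: "diam V E = ecc V E u" by blast
  have "ecc V E u \<in> (\<lambda>w. dist V E w u) ` V" unfolding ecc_def using gr[OF cg] by (intro Max_in) auto
  then obtain w where wV: "w \<in> V" and dw: "ecc V E u = dist V E w u" by blast
  have z0': "dist V E z0 y + D div 2 = dist V E x y" using z0 unfolding D_def by simp
  obtain cu where cu: "cu \<in> V" "dist V E x cu = D div 2" "dist V E cu y + D div 2 = dist V E x y"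
     "dist V E cu u \<le> max (D div 2) (dist V E x y - D div 2) + i"
    using nearest[OF cg al xV yV hx hy z0(1) z0(2) z0' uV] by blast
  obtain cw where cw: "cw \<in> V" "dist V E x cw = D div 2" "dist V E cw y + D div 2 = dist V E x y"
     "dist V E cw w \<le> max (D div 2) (dist V E x y - D div 2) + i"
    using nearest[OF cg al xV yV hx hy z0(1) z0(2) z0' wV] by blast
  have "dist V E cw cu \<le> i + 1" using thin[OF cg al xV yV cw(1) cu(1) cw(2) cu(2) cw(3) cu(3)] .
  moreover have "dist V E w u \<le> dist V E w cw + dist V E cw u" using dist_triangle[OF cg wV uV cw(1)] .
  moreover have "dist V E cw u \<le> dist V E cw cu + dist V E cu u" using dist_triangle[OF cg cw(1) uV cu(1)] .
  moreover have "dist V E w cw = dist V E cw w" using dist_sym[OF cg] wV cw by metis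
  ultimately have "diam V E \<le> 2 * ((D + 1) div 2) + 3 * i + 1"
    using cu(4) cw(4) du dw mx unfolding D_def by linarith
  then have P2: "int D \<ge> int (diam V E) - 3 * int i - 2" by linarith
  have P3: "ecc V E z \<le> (D + 1) div 2 + 2 * i + 1"
    if h: "shortest_path V E x p y" "middle_vertex V E x p y z" for p z
  proof -
    have zV: "z \<in> V" using h unfolding shortest_path_def walk_betw_def walk_def middle_vertex_def by blast
    have dyz: "dist V E y z = dist V E z y" using dist_sym[OF cg] zV yV by metis
    have "{dist V E x z, dist V E z y} = {D div 2, (D + 1) div 2}"
      using h(2) dyz unfolding middle_vertex_def D_def by simp
    then have cs: "(dist V E x z = D div 2 \<and> dist V E z y = (D + 1) div 2) \<or>
       (dist V E x z = (D + 1) div 2 \<and> dist V E z y = D div 2)" by (simp add: doubleton_eq_iff)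
    then have "dist V E z y + dist V E x z = dist V E x y" unfolding D_def by auto
    moreover have "max (dist V E x z) (D - dist V E x z) = (D + 1) div 2" using cs by auto
    ultimately show ?thesis
      using mid_bound[OF cg al xV yV hx hy zV refl] unfolding D_def by simp
  qed
  show ?thesis using P1 P2 P3 unfolding D_def by blast
qed

end
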